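(* Let $f\colon X\to Y$ be a continuous map between path-connected spaces such that $f_*\colon\pi_1(X)\to\pi_1(Y)$ is an isomorphism. Then $\mathsf{TC}^{\mathcal D}(X)\le\mathsf{TC}^{\mathcal D}(Y)$. In particular $\mathsf{TC}^{\mathcal D}$ is a homotopy invariant.
   Context: For a path-connected space $Z$ with $\pi=\pi_1(Z)$, $\mathsf{TC}^{\mathcal D}(Z)$ is the least $k$ such that $Z\times Z=U_0\cup\dots\cup U_k$ with $U_i$ open and such that for every $i$ and every basepoint $u\in U_i$ the homomorphism $\pi_1(U_i,u)\to\pi_1(Z\times Z,u)\cong\pi\times\pi$ induced by inclusion takes values in a subgroup conjugate to the diagonal $\Delta\subset\pi\times\pi$. *)

theory Defs
  imports "HOL-Analysis.Analysis" "HOL-Library.Extended_Nat"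
begin

definition loopin :: "'a topology \<Rightarrow> 'a \<Rightarrow> (real \<Rightarrow> 'a) \<Rightarrow> bool" where
  "loopin X a g \<longleftrightarrow> pathin X g \<and> g 0 = a \<and> g 1 = a"

definition path_homotopic :: "'a topology \<Rightarrow> (real \<Rightarrow> 'a) \<Rightarrow> (real \<Rightarrow> 'a) \<Rightarrow> bool" where
  "path_homotopic X p q \<longleftrightarrow>
     homotopic_with (\<lambda>r. r 0 = p 0 \<and> r 1 = p 1) (top_of_set {0..1}) X p q"

text \<open>The induced map \<open>f_* : \<pi>\<^sub>1(X,x0) \<rightarrow> \<pi>\<^sub>1(Y,f x0)\<close>, \<open>[g] \<mapsto> [f \<circ> g]\<close>, is a bijection
  (hence an isomorphism of groups, being a homomorphism).\<close>
definition pi1_iso_induced :: "'a topology \<Rightarrow> 'b topology \<Rightarrow> ('a \<Rightarrow> 'b) \<Rightarrow> 'a \<Rightarrow> bool" where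
  "pi1_iso_induced X Y f x0 \<longleftrightarrow>
     (\<forall>p q. loopin X x0 p \<and> loopin X x0 q \<and> path_homotopic Y (f \<circ> p) (f \<circ> q)
            \<longrightarrow> path_homotopic X p q) \<and>
     (\<forall>g. loopin Y (f x0) g \<longrightarrow> (\<exists>p. loopin X x0 p \<and> path_homotopic Y (f \<circ> p) g))"

text \<open>Reversal and concatenation of paths in an arbitrary (abstract) space; same formulas as
  the library's \<open>reversepath\<close> and \<open>+++\<close>, which are restricted to type-class topologies.\<close>
definition rev_path :: "(real \<Rightarrow> 'a) \<Rightarrow> real \<Rightarrow> 'a" where
  "rev_path g = (\<lambda>x. g (1 - x))"

definition join_path :: "(real \<Rightarrow> 'a) \<Rightarrow> (real \<Rightarrow> 'a) \<Rightarrow> real \<Rightarrow> 'a" where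
  "join_path g1 g2 = (\<lambda>x. if x \<le> 1/2 then g1 (2 * x) else g2 (2 * x - 1))"

text \<open>An open set \<open>U \<subseteq> Z \<times> Z\<close> is \<open>\<D>\<close>-good if for every \<open>u = (a,b) \<in> U\<close> the image of
  \<open>\<pi>\<^sub>1(U,u) \<rightarrow> \<pi>\<^sub>1(Z \<times> Z,u) \<cong> \<pi>\<^sub>1(Z,a) \<times> \<pi>\<^sub>1(Z,b)\<close> lies in a conjugate of the diagonal.
  The conjugates of the diagonal are exactly the subgroups
  \<open>{([\<alpha>],[p\<^sup>-\<^sup>1 \<alpha> p]) | \<alpha> loop at a}\<close> for \<open>p\<close> a path from \<open>a\<close> to \<open>b\<close>.\<close>
definition diag_good :: "'a topology \<Rightarrow> ('a \<times> 'a) set \<Rightarrow> bool" where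
  "diag_good Z U \<longleftrightarrow>
     (\<forall>u\<in>U. \<exists>p. pathin Z p \<and> p 0 = fst u \<and> p 1 = snd u \<and>
        (\<forall>\<gamma>. loopin (subtopology (prod_topology Z Z) U) u \<gamma> \<longrightarrow>
              path_homotopic Z (snd \<circ> \<gamma>) (join_path (rev_path p) (join_path (fst \<circ> \<gamma>) p))))"

text \<open>\<open>TC\<^sup>\<D>(Z)\<close>: least \<open>k\<close> such that \<open>Z \<times> Z\<close> is covered by \<open>k+1\<close> open \<open>\<D>\<close>-good sets;
  \<open>\<infinity>\<close> if no such \<open>k\<close> exists.\<close>
definition TCD :: "'a topology \<Rightarrow> enat" where
  "TCD Z = (INF k \<in> {k::nat. \<exists>U :: nat \<Rightarrow> ('a \<times> 'a) set.
       (\<forall>i\<le>k. openin (prod_topology Z Z) (U i) \<and> diag_good Z (U i)) \<and>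
       (\<Union>i\<le>k. U i) = topspace (prod_topology Z Z)}. enat k)"

end

theory Submission
  imports Defs
begin

lemma ph_imp:
  assumes "path_homotopic X p q"
  shows "pathin X p \<and> pathin X q \<and> q 0 = p 0 \<and> q 1 = p 1"
  using homotopic_with_imp_continuous_maps[OF assms[unfolded path_homotopic_def]]
        homotopic_with_imp_property[OF assms[unfolded path_homotopic_def]]
  by (simp add: pathin_def)

lemma ph_refl: "pathin X p \<Longrightarrow> path_homotopic X p p"
  by (simp add: path_homotopic_def pathin_def)

lemma ph_sym: assumes "path_homotopic X p q" shows "path_homotopic X q p"
proof -
  have e: "q 0 = p 0" "q 1 = p 1" using ph_imp[OF assms] by auto
  have "homotopic_with (\<lambda>r. r 0 = p 0 \<and> r 1 = p 1) (top_of_set {0..1}) X q p"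
    using assms unfolding path_homotopic_def by (rule homotopic_with_symD)
  then show ?thesis unfolding path_homotopic_def e .
qed

lemma ph_trans: assumes "path_homotopic X p q" "path_homotopic X q r" shows "path_homotopic X p r"
proof -
  have e: "q 0 = p 0" "q 1 = p 1" using ph_imp[OF assms(1)] by auto
  show ?thesis using assms unfolding path_homotopic_def e by (rule homotopic_with_trans)
qed

lemma ph_eqfun:
  assumes "pathin X p" "\<And>t. t \<in> {0..1} \<Longrightarrow> p' t = p t"
  shows "path_homotopic X p' p"
proof -
  have c: "continuous_map (top_of_set {0..1}) X p'"
    using assms unfolding pathin_def by (metis continuous_map_eq topspace_euclidean_subtopology)
  have "p' 0 = p 0" "p' 1 = p 1" using assms(2) by auto
  then show ?thesis unfolding path_homotopic_def
    by (intro homotopic_with_equal c) (auto simp: assms(2))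
qed

lemma ph_eq:
  assumes "path_homotopic X p q" "\<And>t. t \<in> {0..1} \<Longrightarrow> p' t = p t" "\<And>t. t \<in> {0..1} \<Longrightarrow> q' t = q t"
  shows "path_homotopic X p' q'"
proof -
  have "pathin X p" "pathin X q" using ph_imp[OF assms(1)] by auto
  then have "path_homotopic X p' p" "path_homotopic X q' q"
    using ph_eqfun assms(2,3) by blast+
  then show ?thesis using assms(1) ph_sym ph_trans by blast
qed

lemma ph_comp:
  assumes "continuous_map X Y f" "path_homotopic X p q"
  shows "path_homotopic Y (f \<circ> p) (f \<circ> q)"
  unfolding path_homotopic_def
  by (rule homotopic_with_compose_continuous_map_left[OF assms(2)[unfolded path_homotopic_def] assms(1)])
     auto

lemma join_path_0 [simp]: "join_path p q 0 = p 0" by (simp add: join_path_def)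
lemma join_path_1 [simp]: "join_path p q 1 = q 1" by (simp add: join_path_def)
lemma rev_path_0 [simp]: "rev_path p 0 = p 1" by (simp add: rev_path_def)
lemma rev_path_1 [simp]: "rev_path p 1 = p 0" by (simp add: rev_path_def)
lemma comp_join: "f \<circ> join_path p q = join_path (f \<circ> p) (f \<circ> q)"
  by (auto simp: join_path_def fun_eq_iff)
lemma comp_rev: "f \<circ> rev_path p = rev_path (f \<circ> p)"
  by (auto simp: rev_path_def fun_eq_iff)

lemma pathin_rev [simp]: "pathin X p \<Longrightarrow> pathin X (rev_path p)"
  unfolding pathin_def rev_path_def
  apply (rule continuous_map_compose[where f="\<lambda>t. 1 - t" and g=p, unfolded o_def])
  by (auto simp: continuous_map_in_subtopology intro!: continuous_intros)

lemma pathin_join [simp]: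
  assumes "pathin X p" "pathin X q" "p 1 = q 0"
  shows "pathin X (join_path p q)"
proof -
  let ?T01 = "top_of_set {0..1::real}"
  have "continuous_map ?T01 X (\<lambda>x. if x \<le> 1/2 then (p \<circ> (\<lambda>t. 2 * t)) x else (q \<circ> (\<lambda>t. 2 * t -1)) x)"
  proof (intro continuous_map_cases_le continuous_map_compose, force, force)
      show "continuous_map (subtopology ?T01 {x \<in> topspace ?T01. x \<le> 1/2}) ?T01 ((*) 2)"
        by (auto simp: continuous_map_in_subtopology continuous_map_from_subtopology)
      have "continuous_map
             (subtopology (top_of_set {0..1}) {x. 0 \<le> x \<and> x \<le> 1 \<and> 1 \<le> x * 2})
             euclideanreal (\<lambda>t. 2 * t - 1)"
        by (intro continuous_intros) (force intro: continuous_map_from_subtopology)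
      then show "continuous_map (subtopology ?T01 {x \<in> topspace ?T01. 1/2 \<le> x}) ?T01 (\<lambda>t. 2 * t - 1)"
        by (force simp: continuous_map_in_subtopology)
  qed (use assms in \<open>auto simp: pathin_def algebra_simps\<close>)
  moreover have "(\<lambda>x. if x \<le> 1/2 then (p \<circ> (\<lambda>t. 2 * t)) x else (q \<circ> (\<lambda>t. 2 * t -1)) x) = join_path p q"
    by (auto simp: fun_eq_iff join_path_def)
  ultimately show ?thesis by (simp add: pathin_def)
qed

lemma ph_reparam:
  fixes \<Phi> :: "'v::real_normed_vector \<Rightarrow> 'a"
  assumes S: "convex S" and cP: "continuous_map (top_of_set S) X \<Phi>"
    and cs: "continuous_on {0..1} \<sigma>" and ct: "continuous_on {0..1} \<tau>"
    and ss: "\<sigma> ` {0..1} \<subseteq> S" and ts: "\<tau> ` {0..1} \<subseteq> S"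
    and e0: "\<sigma> 0 = \<tau> 0" and e1: "\<sigma> 1 = \<tau> 1"
  shows "path_homotopic X (\<Phi> \<circ> \<sigma>) (\<Phi> \<circ> \<tau>)"
proof -
  define g where "g = (\<lambda>z::real\<times>real. (1 - fst z) *\<^sub>R \<sigma> (snd z) + fst z *\<^sub>R \<tau> (snd z))"
  have gc: "continuous_map (top_of_set ({0..1} \<times> {0..1})) (top_of_set S) g"
  proof -
    have "continuous_on ({0..1} \<times> {0..1}) g" unfolding g_def
      by (intro continuous_intros continuous_on_compose2[OF cs] continuous_on_compose2[OF ct]) auto
    moreover have "g z \<in> S" if "z \<in> {0..1} \<times> {0..1}" for z
    proof -
      have "\<sigma> (snd z) \<in> S" "\<tau> (snd z) \<in> S" using that ss ts by auto
      then show ?thesis using that S unfolding convex_alt g_def by (auto simp: algebra_simps)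
    qed
    ultimately show ?thesis by auto
  qed
  have c: "continuous_map (prod_topology (top_of_set {0..1}) (top_of_set {0..1})) X (\<lambda>z. \<Phi> (g z))"
    using continuous_map_compose[OF gc cP] by (simp add: o_def)
  show ?thesis
    unfolding path_homotopic_def homotopic_with_def
    apply (rule exI[where x="\<lambda>z. \<Phi> (g z)"])
    using c by (simp add: g_def e0 e1 flip: scaleR_add_left)
qed

lemma ph_reparam1:
  assumes p: "pathin X p"
    and cs: "continuous_on {0..1} \<phi>" and ct: "continuous_on {0..1} \<psi>"
    and ss: "\<And>t. t \<in> {0..1} \<Longrightarrow> \<phi> t \<in> {0..1}" and ts: "\<And>t. t \<in> {0..1} \<Longrightarrow> \<psi> t \<in> {0..1}"
    and e0: "\<phi> 0 = \<psi> 0" and e1: "\<phi> 1 = \<psi> 1"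
    and g: "\<And>t. t \<in> {0..1} \<Longrightarrow> g t = p (\<phi> t)"
    and h: "\<And>t. t \<in> {0..1} \<Longrightarrow> h t = p (\<psi> t)"
  shows "path_homotopic X g h"
proof -
  have "path_homotopic X (p \<circ> \<phi>) (p \<circ> \<psi>)"
    by (rule ph_reparam[where S="{0..1::real}"]) (use assms in \<open>auto simp: pathin_def\<close>)
  then show ?thesis by (rule ph_eq) (auto simp: g h)
qed

lemma ph_lid: assumes "pathin X p" shows "path_homotopic X (join_path (\<lambda>_. p 0) p) p"
  by (rule ph_reparam1[OF assms, where \<phi>="\<lambda>t. max 0 (2*t-1)" and \<psi>="\<lambda>t. t"])
     (auto simp: join_path_def intro!: continuous_intros)

lemma ph_rid: assumes "pathin X p" shows "path_homotopic X (join_path p (\<lambda>_. p 1)) p"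
  by (rule ph_reparam1[OF assms, where \<phi>="\<lambda>t. min 1 (2*t)" and \<psi>="\<lambda>t. t"])
     (auto simp: join_path_def intro!: continuous_intros)

lemma ph_linv: assumes "pathin X p" shows "path_homotopic X (join_path (rev_path p) p) (\<lambda>_. p 1)"
  by (rule ph_reparam1[OF assms, where \<phi>="\<lambda>t. \<bar>1-2*t\<bar>" and \<psi>="\<lambda>t. 1"])
     (auto simp: join_path_def rev_path_def intro!: continuous_intros)

lemma ph_rinv: assumes "pathin X p" shows "path_homotopic X (join_path p (rev_path p)) (\<lambda>_. p 0)"
  by (rule ph_reparam1[OF assms, where \<phi>="\<lambda>t. 1 - \<bar>1-2*t\<bar>" and \<psi>="\<lambda>t. 0"])
     (auto simp: join_path_def rev_path_def intro!: continuous_intros)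

lemma ph_assoc:
  assumes "pathin X p" "pathin X q" "pathin X r" "p 1 = q 0" "q 1 = r 0"
  shows "path_homotopic X (join_path (join_path p q) r) (join_path p (join_path q r))"
proof (rule ph_reparam1[where p="join_path p (join_path q r)" and \<phi>="\<lambda>t. min (2*t) (min (t+1/4) ((t+1)/2))" and \<psi>="\<lambda>t. t"])
  fix t :: real assume t: "t \<in> {0..1}"
  show "join_path (join_path p q) r t = join_path p (join_path q r) (min (2*t) (min (t+1/4) ((t+1)/2)))"
  proof (cases "t \<le> 1/4")
    case True then show ?thesis by (simp add: join_path_def min_def)
  next
    case False
    show ?thesis
    proof (cases "t \<le> 1/2")
      case True then show ?thesis using False by (simp add: join_path_def min_def algebra_simps)
    next
      case F2: False
      have m: "min (2*t) (min (t+1/4) ((t+1)/2)) = (t+1)/2" using F2 by (simp add: min_def)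
      have a: "2*((t+1)/2) - 1 = t" by (simp add: field_simps)
      have a2: "(4 * t + 4) / 2 - 3 = 2*t - 1" by (simp add: field_simps)
      show ?thesis using F2 by (simp add: m a a2 join_path_def)
    qed
  qed
qed (use assms in \<open>auto intro!: continuous_intros simp: min_le_iff_disj\<close>)

lemma ph_rev:
  assumes "path_homotopic X p q" shows "path_homotopic X (rev_path p) (rev_path q)"
proof -
  have "homotopic_with (\<lambda>r. r 0 = p 1 \<and> r 1 = p 0) (top_of_set {0..1}) X (p \<circ> (\<lambda>t. 1 - t)) (q \<circ> (\<lambda>t. 1 - t))"
    by (rule homotopic_with_compose_continuous_map_right[OF assms[unfolded path_homotopic_def]])
       (auto simp: continuous_map_in_subtopology intro!: continuous_intros)
  then show ?thesis by (simp add: path_homotopic_def rev_path_def o_def)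
qed

lemma ph_join:
  assumes pp: "path_homotopic X p p'" and qq: "path_homotopic X q q'" and e: "p 1 = q 0"
  shows "path_homotopic X (join_path p q) (join_path p' q')"
proof -
  let ?I = "{0..1::real}"
  obtain H where cH: "continuous_map (top_of_set (?I \<times> ?I)) X H"
    and H0: "\<forall>x. H (0, x) = p x" and H1: "\<forall>x. H (1, x) = p' x"
    and HP: "\<forall>s\<in>?I. H (s, 0) = p 0 \<and> H (s, 1) = p 1"
    using pp unfolding path_homotopic_def homotopic_with_def by auto
  obtain K where cK: "continuous_map (top_of_set (?I \<times> ?I)) X K"
    and K0: "\<forall>x. K (0, x) = q x" and K1: "\<forall>x. K (1, x) = q' x"
    and KP: "\<forall>s\<in>?I. K (s, 0) = q 0 \<and> K (s, 1) = q 1"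
    using qq unfolding path_homotopic_def homotopic_with_def by auto
  define L where "L = (\<lambda>z::real\<times>real. if snd z \<le> 1/2 then (H \<circ> (\<lambda>z. (fst z, 2 * snd z))) z
                                        else (K \<circ> (\<lambda>z. (fst z, 2 * snd z - 1))) z)"
  have cL: "continuous_map (top_of_set (?I \<times> ?I)) X L"
    unfolding L_def
  proof (rule continuous_map_cases_le)
    show "continuous_map (top_of_set (?I \<times> ?I)) euclideanreal snd"
      by (simp add: continuous_on_snd[OF continuous_on_id])
    show "continuous_map (top_of_set (?I \<times> ?I)) euclideanreal (\<lambda>x. 1/2)" by simp
    show "continuous_map (subtopology (top_of_set (?I \<times> ?I)) {x \<in> topspace (top_of_set (?I \<times> ?I)). snd x \<le> 1/2}) X
             (H \<circ> (\<lambda>z. (fst z, 2 * snd z)))"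
    proof (rule continuous_map_compose[OF _ cH])
      show "continuous_map (subtopology (top_of_set (?I \<times> ?I)) {x \<in> topspace (top_of_set (?I \<times> ?I)). snd x \<le> 1/2})
          (top_of_set (?I \<times> ?I)) (\<lambda>z. (fst z, 2 * snd z))"
        by (auto simp: subtopology_subtopology intro!: continuous_intros)
    qed
    show "continuous_map (subtopology (top_of_set (?I \<times> ?I)) {x \<in> topspace (top_of_set (?I \<times> ?I)). 1/2 \<le> snd x}) X
             (K \<circ> (\<lambda>z. (fst z, 2 * snd z - 1)))"
    proof (rule continuous_map_compose[OF _ cK])
      show "continuous_map (subtopology (top_of_set (?I \<times> ?I)) {x \<in> topspace (top_of_set (?I \<times> ?I)). 1/2 \<le> snd x})
          (top_of_set (?I \<times> ?I)) (\<lambda>z. (fst z, 2 * snd z - 1))"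
        by (auto simp: subtopology_subtopology intro!: continuous_intros)
    qed
    fix x assume "x \<in> topspace (top_of_set (?I \<times> ?I))" "snd x = 1/2"
    then show "(H \<circ> (\<lambda>z. (fst z, 2 * snd z))) x = (K \<circ> (\<lambda>z. (fst z, 2 * snd z - 1))) x"
      using HP KP e by (cases x) (auto simp: algebra_simps)
  qed
  show ?thesis
    unfolding path_homotopic_def homotopic_with_def
    apply (rule exI[where x=L])
    using cL HP KP H0 H1 K0 K1 by (auto simp: L_def join_path_def)
qed

lemma ph_joinl: "path_homotopic X p p' \<Longrightarrow> pathin X q \<Longrightarrow> p 1 = q 0 \<Longrightarrow>
   path_homotopic X (join_path p q) (join_path p' q)"
  using ph_join ph_refl by blast

lemma ph_joinr: "path_homotopic X q q' \<Longrightarrow> pathin X p \<Longrightarrow> p 1 = q 0 \<Longrightarrow>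
   path_homotopic X (join_path p q) (join_path p q')"
  using ph_join ph_refl by blast

lemma ph_K:
  assumes c: "pathin X c" and M: "pathin X M" and d: "pathin X d"
    and e: "c 0 = d 0" "c 1 = M 0" "M 1 = d 1"
  shows "path_homotopic X (join_path (rev_path c) (join_path (join_path c (join_path M (rev_path d))) d)) M"
proof -
  define R where "R = join_path M (rev_path d)"
  have R: "pathin X R" "R 0 = M 0" "R 1 = d 0" using assms by (auto simp: R_def)
  have Rd: "pathin X (join_path R d)" "join_path R d 0 = M 0" using R d by auto
  have s1: "path_homotopic X (join_path (rev_path c) (join_path (join_path c R) d))
                              (join_path (rev_path c) (join_path c (join_path R d)))"
    by (rule ph_joinr[OF ph_assoc]) (use assms R in auto)
  have s2: "path_homotopic X (join_path (rev_path c) (join_path c (join_path R d)))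
                              (join_path (join_path (rev_path c) c) (join_path R d))"
    by (rule ph_sym[OF ph_assoc]) (use assms R in auto)
  have s3: "path_homotopic X (join_path (join_path (rev_path c) c) (join_path R d))
                              (join_path (\<lambda>_. c 1) (join_path R d))"
    by (rule ph_joinl[OF ph_linv]) (use assms R Rd in auto)
  have s4: "path_homotopic X (join_path (\<lambda>_. c 1) (join_path R d)) (join_path R d)"
    using ph_lid[OF Rd(1)] Rd(2) e by simp
  have s5: "path_homotopic X (join_path R d) (join_path M (join_path (rev_path d) d))"
    unfolding R_def by (rule ph_assoc) (use assms in auto)
  have s6: "path_homotopic X (join_path M (join_path (rev_path d) d)) (join_path M (\<lambda>_. d 1))"
    by (rule ph_joinr[OF ph_linv]) (use assms in auto)
  have s7: "path_homotopic X (join_path M (\<lambda>_. d 1)) M"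
    using ph_rid[OF M] e by simp
  show ?thesis unfolding R_def[symmetric]
    by (meson s1 s2 s3 s4 s5 s6 s7 ph_trans)
qed

lemma ph_cancel1:
  assumes "pathin X c" "pathin X p" "c 1 = p 0"
  shows "path_homotopic X (join_path (rev_path c) (join_path c p)) p"
proof -
  have s1: "path_homotopic X (join_path (rev_path c) (join_path c p)) (join_path (join_path (rev_path c) c) p)"
    by (rule ph_sym[OF ph_assoc]) (use assms in auto)
  have s2: "path_homotopic X (join_path (join_path (rev_path c) c) p) (join_path (\<lambda>_. c 1) p)"
    by (rule ph_joinl[OF ph_linv]) (use assms in auto)
  have s3: "path_homotopic X (join_path (\<lambda>_. c 1) p) p"
    using ph_lid[OF assms(2)] assms by simp
  show ?thesis by (meson s1 s2 s3 ph_trans)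
qed

lemma ph_cancel2:
  assumes "pathin X c" "pathin X p" "c 0 = p 0"
  shows "path_homotopic X (join_path c (join_path (rev_path c) p)) p"
proof -
  have s1: "path_homotopic X (join_path c (join_path (rev_path c) p)) (join_path (join_path c (rev_path c)) p)"
    by (rule ph_sym[OF ph_assoc]) (use assms in auto)
  have s2: "path_homotopic X (join_path (join_path c (rev_path c)) p) (join_path (\<lambda>_. c 0) p)"
    by (rule ph_joinl[OF ph_rinv]) (use assms in auto)
  have s3: "path_homotopic X (join_path (\<lambda>_. c 0) p) p"
    using ph_lid[OF assms(2)] assms by simp
  show ?thesis by (meson s1 s2 s3 ph_trans)
qed

lemma ph_cancel3:
  assumes "pathin X c" "pathin X p" "p 1 = c 0"
  shows "path_homotopic X (join_path (join_path p c) (rev_path c)) p"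
proof -
  have s1: "path_homotopic X (join_path (join_path p c) (rev_path c)) (join_path p (join_path c (rev_path c)))"
    by (rule ph_assoc) (use assms in auto)
  have s2: "path_homotopic X (join_path p (join_path c (rev_path c))) (join_path p (\<lambda>_. c 0))"
    by (rule ph_joinr[OF ph_rinv]) (use assms in auto)
  have s3: "path_homotopic X (join_path p (\<lambda>_. c 0)) p"
    using ph_rid[OF assms(2)] assms by simp
  show ?thesis by (meson s1 s2 s3 ph_trans)
qed

lemma ph_lcancel:
  assumes "pathin X c" "pathin X p" "pathin X q" "c 1 = p 0" "c 1 = q 0"
    and h: "path_homotopic X (join_path c p) (join_path c q)"
  shows "path_homotopic X p q"
proof -
  have "path_homotopic X (join_path (rev_path c) (join_path c p)) (join_path (rev_path c) (join_path c q))"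
    by (rule ph_joinr[OF h]) (use assms in auto)
  then show ?thesis using ph_cancel1[of X c p] ph_cancel1[of X c q] assms
    by (meson ph_sym ph_trans)
qed

lemma ph_rcancel:
  assumes "pathin X c" "pathin X p" "pathin X q" "p 1 = c 0" "q 1 = c 0"
    and h: "path_homotopic X (join_path p c) (join_path q c)"
  shows "path_homotopic X p q"
proof -
  have "path_homotopic X (join_path (join_path p c) (rev_path c)) (join_path (join_path q c) (rev_path c))"
    by (rule ph_joinl[OF h]) (use assms in auto)
  then show ?thesis using ph_cancel3[of X c p] ph_cancel3[of X c q] assms
    by (meson ph_sym ph_trans)
qed

lemma pathin_track:
  assumes "continuous_map (prod_topology (top_of_set {0..1}) X) Z H" "a \<in> topspace X"
  shows "pathin Z (\<lambda>s. H (s, a))"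
proof -
  have "continuous_map (top_of_set {0..1}) (prod_topology (top_of_set {0..1}) X) (\<lambda>s. (s, a))"
    using assms(2) by (intro continuous_map_pairedI) (auto simp: continuous_map_in_subtopology)
  from continuous_map_compose[OF this assms(1)] show ?thesis by (simp add: pathin_def o_def)
qed

lemma ph_square:
  assumes cH: "continuous_map (prod_topology (top_of_set {0..1}) X) Z H"
    and H0: "\<And>x. H (0, x) = F x" and H1: "\<And>x. H (1, x) = G x" and al: "pathin X \<alpha>"
  shows "path_homotopic Z (join_path (F \<circ> \<alpha>) (\<lambda>s. H (s, \<alpha> 1))) (join_path (\<lambda>s. H (s, \<alpha> 0)) (G \<circ> \<alpha>))"
proof -
  let ?I = "{0..1::real}"
  define \<Phi> where "\<Phi> = (\<lambda>z::real\<times>real. H (fst z, \<alpha> (snd z)))"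
  define \<sigma> where "\<sigma> = (\<lambda>t::real. (max 0 (2*t-1), min 1 (2*t)))"
  define \<tau> where "\<tau> = (\<lambda>t::real. (min 1 (2*t), max 0 (2*t-1)))"
  have inner: "continuous_map (top_of_set (?I \<times> ?I)) (prod_topology (top_of_set ?I) X) (\<lambda>z. (fst z, \<alpha> (snd z)))"
  proof (intro continuous_map_pairedI)
    show "continuous_map (top_of_set (?I \<times> ?I)) (top_of_set ?I) fst"
      by (auto simp: continuous_on_fst[OF continuous_on_id])
    have "continuous_map (top_of_set (?I \<times> ?I)) (top_of_set ?I) snd"
      by (auto simp: continuous_on_snd[OF continuous_on_id])
    from continuous_map_compose[OF this al[unfolded pathin_def]]
    show "continuous_map (top_of_set (?I \<times> ?I)) X (\<lambda>z. \<alpha> (snd z))" by (simp add: o_def)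
  qed
  have cP: "continuous_map (top_of_set (?I \<times> ?I)) Z \<Phi>"
    using continuous_map_compose[OF inner cH] by (simp add: \<Phi>_def o_def)
  have "path_homotopic Z (\<Phi> \<circ> \<sigma>) (\<Phi> \<circ> \<tau>)"
    by (rule ph_reparam[OF _ cP]) (auto simp: \<sigma>_def \<tau>_def convex_Times intro!: continuous_intros)
  then show ?thesis
    by (rule ph_eq) (auto simp: \<Phi>_def \<sigma>_def \<tau>_def join_path_def H0 H1)
qed

lemma iso_inj:
  assumes pcX: "path_connected_space X" and fc: "continuous_map X Y f" and x0: "x0 \<in> topspace X"
    and iso: "pi1_iso_induced X Y f x0" and b: "b \<in> topspace X"
    and la: "loopin X b \<alpha>" and lb: "loopin X b \<beta>" and h: "path_homotopic Y (f \<circ> \<alpha>) (f \<circ> \<beta>)"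
  shows "path_homotopic X \<alpha> \<beta>"
proof -
  obtain c where c: "pathin X c" "c 0 = x0" "c 1 = b"
    using pcX x0 b unfolding path_connected_space_def by blast
  have a: "pathin X \<alpha>" "\<alpha> 0 = b" "\<alpha> 1 = b" and bb: "pathin X \<beta>" "\<beta> 0 = b" "\<beta> 1 = b"
    using la lb by (auto simp: loopin_def)
  define \<alpha>' where "\<alpha>' = join_path c (join_path \<alpha> (rev_path c))"
  define \<beta>' where "\<beta>' = join_path c (join_path \<beta> (rev_path c))"
  have fc': "pathin Y (f \<circ> c)" using c fc by (simp add: pathin_compose)
  have fa: "pathin Y (f \<circ> \<alpha>)" "pathin Y (f \<circ> \<beta>)" using a bb fc by (auto simp: pathin_compose)
  have "path_homotopic Y (join_path (f \<circ> c) (join_path (f \<circ> \<alpha>) (rev_path (f \<circ> c))))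
                         (join_path (f \<circ> c) (join_path (f \<circ> \<beta>) (rev_path (f \<circ> c))))"
    by (rule ph_joinr[OF ph_joinl[OF h]]) (use fc' fa a bb c in auto)
  then have "path_homotopic Y (f \<circ> \<alpha>') (f \<circ> \<beta>')"
    by (simp add: \<alpha>'_def \<beta>'_def comp_join comp_rev)
  moreover have "loopin X x0 \<alpha>'" "loopin X x0 \<beta>'"
    using a bb c by (auto simp: loopin_def \<alpha>'_def \<beta>'_def)
  ultimately have ab': "path_homotopic X \<alpha>' \<beta>'"
    using iso unfolding pi1_iso_induced_def by blast
  have "path_homotopic X (join_path (rev_path c) (join_path \<alpha>' c)) (join_path (rev_path c) (join_path \<beta>' c))"
    by (rule ph_joinr[OF ph_joinl[OF ab']]) (use a bb c in \<open>auto simp: \<alpha>'_def \<beta>'_def\<close>)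
  moreover have "path_homotopic X (join_path (rev_path c) (join_path \<alpha>' c)) \<alpha>"
    unfolding \<alpha>'_def by (rule ph_K) (use a c in auto)
  moreover have "path_homotopic X (join_path (rev_path c) (join_path \<beta>' c)) \<beta>"
    unfolding \<beta>'_def by (rule ph_K) (use bb c in auto)
  ultimately show ?thesis by (meson ph_sym ph_trans)
qed

lemma iso_surj:
  assumes pcX: "path_connected_space X" and fc: "continuous_map X Y f" and x0: "x0 \<in> topspace X"
    and iso: "pi1_iso_induced X Y f x0" and a: "a \<in> topspace X" and b: "b \<in> topspace X"
    and q: "pathin Y q" "q 0 = f a" "q 1 = f b"
  shows "\<exists>p. pathin X p \<and> p 0 = a \<and> p 1 = b \<and> path_homotopic Y (f \<circ> p) q"
proof -
  obtain c where c: "pathin X c" "c 0 = x0" "c 1 = a"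
    using pcX x0 a unfolding path_connected_space_def by blast
  obtain d where d: "pathin X d" "d 0 = x0" "d 1 = b"
    using pcX x0 b unfolding path_connected_space_def by blast
  have fc': "pathin Y (f \<circ> c)" "pathin Y (f \<circ> d)" using c d fc by (auto simp: pathin_compose)
  define g where "g = join_path (f \<circ> c) (join_path q (rev_path (f \<circ> d)))"
  have "loopin Y (f x0) g" using fc' c d q by (auto simp: g_def loopin_def)
  then obtain p0 where p0: "loopin X x0 p0" "path_homotopic Y (f \<circ> p0) g"
    using iso unfolding pi1_iso_induced_def by blast
  have p0': "pathin X p0" "p0 0 = x0" "p0 1 = x0" using p0 by (auto simp: loopin_def)
  define p where "p = join_path (rev_path c) (join_path p0 d)"
  have "path_homotopic Y (join_path (rev_path (f \<circ> c)) (join_path (f \<circ> p0) (f \<circ> d)))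
                         (join_path (rev_path (f \<circ> c)) (join_path g (f \<circ> d)))"
    by (rule ph_joinr[OF ph_joinl[OF p0(2)]]) (use fc' p0' c d fc in \<open>auto simp: pathin_compose\<close>)
  moreover have "path_homotopic Y (join_path (rev_path (f \<circ> c)) (join_path g (f \<circ> d))) q"
    unfolding g_def by (rule ph_K) (use fc' q c d in auto)
  ultimately have "path_homotopic Y (f \<circ> p) q"
    unfolding p_def comp_join comp_rev by (rule ph_trans)
  moreover have "pathin X p" "p 0 = a" "p 1 = b" using c d p0' by (auto simp: p_def)
  ultimately show ?thesis by blast
qed

lemma part1:
  assumes pcX: "path_connected_space X" and fc: "continuous_map X Y f" and x0: "x0 \<in> topspace X"
    and iso: "pi1_iso_induced X Y f x0"
  shows "TCD X \<le> TCD Y"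
  unfolding TCD_def
proof (rule INF_superset_mono)
  define ff where "ff = (\<lambda>u. (f (fst u), f (snd u)))"
  have c1: "continuous_map (prod_topology X X) Y (\<lambda>u. f (fst u))"
    using continuous_map_compose[OF continuous_map_fst fc] by (simp add: o_def)
  have c2: "continuous_map (prod_topology X X) Y (\<lambda>u. f (snd u))"
    using continuous_map_compose[OF continuous_map_snd fc] by (simp add: o_def)
  have cff: "continuous_map (prod_topology X X) (prod_topology Y Y) ff"
    unfolding ff_def using c1 c2 by (rule continuous_map_pairedI)
  show "{k::nat. \<exists>U :: nat \<Rightarrow> ('b \<times> 'b) set.
       (\<forall>i\<le>k. openin (prod_topology Y Y) (U i) \<and> diag_good Y (U i)) \<and>
       (\<Union>i\<le>k. U i) = topspace (prod_topology Y Y)}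
     \<subseteq> {k::nat. \<exists>U :: nat \<Rightarrow> ('a \<times> 'a) set.
       (\<forall>i\<le>k. openin (prod_topology X X) (U i) \<and> diag_good X (U i)) \<and>
       (\<Union>i\<le>k. U i) = topspace (prod_topology X X)}"
  proof (intro subsetI CollectI, elim CollectE exE conjE)
    fix k :: nat and V :: "nat \<Rightarrow> ('b \<times> 'b) set"
    assume V: "\<forall>i\<le>k. openin (prod_topology Y Y) (V i) \<and> diag_good Y (V i)"
      and cov: "(\<Union>i\<le>k. V i) = topspace (prod_topology Y Y)"
    define U where "U i = {u \<in> topspace (prod_topology X X). ff u \<in> V i}" for i
    have op: "openin (prod_topology X X) (U i)" if "i \<le> k" for i
      unfolding U_def using V that openin_continuous_map_preimage[OF cff] by blast
    have cv: "(\<Union>i\<le>k. U i) = topspace (prod_topology X X)"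
    proof
      show "(\<Union>i\<le>k. U i) \<subseteq> topspace (prod_topology X X)" by (auto simp: U_def)
      show "topspace (prod_topology X X) \<subseteq> (\<Union>i\<le>k. U i)"
      proof
        fix u assume u: "u \<in> topspace (prod_topology X X)"
        then have "ff u \<in> topspace (prod_topology Y Y)" using cff by (meson continuous_map_def funcset_mem)
        then show "u \<in> (\<Union>i\<le>k. U i)" using cov u by (auto simp: U_def)
      qed
    qed
    have dg: "diag_good X (U i)" if i: "i \<le> k" for i
      unfolding diag_good_def
    proof
      fix u assume u: "u \<in> U i"
      obtain a b where ab: "u = (a, b)" by fastforce
      have a: "a \<in> topspace X" and b: "b \<in> topspace X" and fu: "(f a, f b) \<in> V i"
        using u by (auto simp: U_def ab ff_def)
      obtain q where q: "pathin Y q" "q 0 = f a" "q 1 = f b"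
        and qh: "\<And>\<gamma>. loopin (subtopology (prod_topology Y Y) (V i)) (f a, f b) \<gamma> \<Longrightarrow>
              path_homotopic Y (snd \<circ> \<gamma>) (join_path (rev_path q) (join_path (fst \<circ> \<gamma>) q))"
        using V i fu unfolding diag_good_def by fastforce
      obtain p where p: "pathin X p" "p 0 = a" "p 1 = b" and pq: "path_homotopic Y (f \<circ> p) q"
        using iso_surj[OF pcX fc x0 iso a b q] by blast
      show "\<exists>p. pathin X p \<and> p 0 = fst u \<and> p 1 = snd u \<and>
             (\<forall>\<gamma>. loopin (subtopology (prod_topology X X) (U i)) u \<gamma> \<longrightarrow>
              path_homotopic X (snd \<circ> \<gamma>) (join_path (rev_path p) (join_path (fst \<circ> \<gamma>) p)))"
      proof (intro exI conjI allI impI)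
        show "pathin X p" "p 0 = fst u" "p 1 = snd u" using p ab by auto
        fix \<gamma> assume g: "loopin (subtopology (prod_topology X X) (U i)) u \<gamma>"
        have gp: "pathin (subtopology (prod_topology X X) (U i)) \<gamma>" "\<gamma> 0 = (a, b)" "\<gamma> 1 = (a, b)"
          using g ab by (auto simp: loopin_def)
        have cs: "continuous_map (subtopology (prod_topology X X) (U i)) (subtopology (prod_topology Y Y) (V i)) ff"
          using cff by (auto simp: continuous_map_in_subtopology U_def continuous_map_from_subtopology)
        have "loopin (subtopology (prod_topology Y Y) (V i)) (f a, f b) (ff \<circ> \<gamma>)"
          using gp cs by (auto simp: loopin_def pathin_compose ff_def)
        from qh[OF this]
        have h1: "path_homotopic Y (f \<circ> (snd \<circ> \<gamma>)) (join_path (rev_path q) (join_path (f \<circ> (fst \<circ> \<gamma>)) q))"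
          by (simp add: ff_def o_def)
        have g1: "pathin X (fst \<circ> \<gamma>)" "pathin X (snd \<circ> \<gamma>)"
          using gp(1) by (auto intro: pathin_compose continuous_map_from_subtopology continuous_map_fst continuous_map_snd)
        have fg1: "pathin Y (f \<circ> (fst \<circ> \<gamma>))" using g1 fc by (simp add: pathin_compose)
        have fp: "pathin Y (f \<circ> p)" using p fc by (simp add: pathin_compose)
        have h2: "path_homotopic Y (join_path (rev_path q) (join_path (f \<circ> (fst \<circ> \<gamma>)) q))
                    (join_path (rev_path (f \<circ> p)) (join_path (f \<circ> (fst \<circ> \<gamma>)) (f \<circ> p)))"
          by (rule ph_join[OF ph_rev[OF ph_sym[OF pq]] ph_joinr[OF ph_sym[OF pq]]])
             (use q gp fg1 in auto)
        have hh: "path_homotopic Y (f \<circ> (snd \<circ> \<gamma>)) (f \<circ> join_path (rev_path p) (join_path (fst \<circ> \<gamma>) p))"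
          using ph_trans[OF h1 h2] by (simp add: comp_join comp_rev)
        show "path_homotopic X (snd \<circ> \<gamma>) (join_path (rev_path p) (join_path (fst \<circ> \<gamma>) p))"
          by (rule iso_inj[OF pcX fc x0 iso b _ _ hh])
             (use g1 gp p in \<open>auto simp: loopin_def\<close>)
      qed
    qed
    show "\<exists>U :: nat \<Rightarrow> ('a \<times> 'a) set.
       (\<forall>i\<le>k. openin (prod_topology X X) (U i) \<and> diag_good X (U i)) \<and>
       (\<Union>i\<le>k. U i) = topspace (prod_topology X X)"
      using op dg cv by blast
  qed
qed simp

lemma heq_inj:
  assumes fc: "continuous_map X Y f" and gc: "continuous_map Y X g"
    and hom: "homotopic_with (\<lambda>x. True) X X (g \<circ> f) id" and x0: "x0 \<in> topspace X"
    and lp: "loopin X x0 p" and lq: "loopin X x0 q" and h: "path_homotopic Y (f \<circ> p) (f \<circ> q)"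
  shows "path_homotopic X p q"
proof -
  obtain H :: "real \<times> 'a \<Rightarrow> 'a" where cH: "continuous_map (prod_topology (top_of_set {0..1}) X) X H"
    and H0: "\<And>x. H (0, x) = (g \<circ> f) x" and H1: "\<And>x. H (1, x) = id x"
    using hom unfolding homotopic_with_def comp_def id_def by blast
  define c where "c = (\<lambda>s. H (s, x0))"
  have c: "pathin X c" "c 0 = g (f x0)" "c 1 = x0"
    using pathin_track[OF cH x0] H0 H1 by (auto simp: c_def)
  have p: "pathin X p" "p 0 = x0" "p 1 = x0" and q: "pathin X q" "q 0 = x0" "q 1 = x0"
    using lp lq by (auto simp: loopin_def)
  have sp: "path_homotopic X (join_path ((g \<circ> f) \<circ> p) c) (join_path c p)"
    using ph_square[where F="g \<circ> f" and G=id, OF cH H0 H1 p(1)] p by (simp add: c_def)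
  have sq: "path_homotopic X (join_path ((g \<circ> f) \<circ> q) c) (join_path c q)"
    using ph_square[where F="g \<circ> f" and G=id, OF cH H0 H1 q(1)] q by (simp add: c_def)
  have "path_homotopic X (g \<circ> (f \<circ> p)) (g \<circ> (f \<circ> q))" by (rule ph_comp[OF gc h])
  then have gg: "path_homotopic X ((g \<circ> f) \<circ> p) ((g \<circ> f) \<circ> q)" by (simp add: o_assoc)
  have "path_homotopic X (join_path ((g \<circ> f) \<circ> p) c) (join_path ((g \<circ> f) \<circ> q) c)"
    by (rule ph_joinl[OF gg c(1)]) (use p q c in auto)
  then have jj: "path_homotopic X (join_path c p) (join_path c q)"
    using sp sq by (meson ph_sym ph_trans)
  show ?thesis by (rule ph_lcancel[OF c(1) p(1) q(1) _ _ jj]) (use p q c in auto)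
qed

lemma heq_iso:
  assumes fc: "continuous_map X Y f" and gc: "continuous_map Y X g"
    and hom: "homotopic_with (\<lambda>x. True) X X (g \<circ> f) id"
    and hom2: "homotopic_with (\<lambda>x. True) Y Y (f \<circ> g) id" and x0: "x0 \<in> topspace X"
  shows "pi1_iso_induced X Y f x0"
  unfolding pi1_iso_induced_def
proof (intro conjI allI impI)
  fix p q assume "loopin X x0 p \<and> loopin X x0 q \<and> path_homotopic Y (f \<circ> p) (f \<circ> q)"
  then show "path_homotopic X p q" using heq_inj[OF fc gc hom x0] by blast
next
  fix \<beta> assume lb: "loopin Y (f x0) \<beta>"
  have fx0: "f x0 \<in> topspace Y" using continuous_map_image_subset_topspace[OF fc] x0 by blast
  obtain H :: "real \<times> 'a \<Rightarrow> 'a" where cH: "continuous_map (prod_topology (top_of_set {0..1}) X) X H"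
    and H0: "\<And>x. H (0, x) = (g \<circ> f) x" and H1: "\<And>x. H (1, x) = id x"
    using hom unfolding homotopic_with_def comp_def id_def by blast
  define c where "c = (\<lambda>s. H (s, x0))"
  have c: "pathin X c" "c 0 = g (f x0)" "c 1 = x0"
    using pathin_track[OF cH x0] H0 H1 by (auto simp: c_def)
  have b: "pathin Y \<beta>" "\<beta> 0 = f x0" "\<beta> 1 = f x0" using lb by (auto simp: loopin_def)
  have gb: "pathin X (g \<circ> \<beta>)" "(g \<circ> \<beta>) 0 = g (f x0)" "(g \<circ> \<beta>) 1 = g (f x0)"
    using b gc by (auto simp: pathin_compose)
  define \<alpha> where "\<alpha> = join_path (rev_path c) (join_path (g \<circ> \<beta>) c)"
  have a: "pathin X \<alpha>" "\<alpha> 0 = x0" "\<alpha> 1 = x0" using c gb by (auto simp: \<alpha>_def)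
  have sa: "path_homotopic X (join_path ((g \<circ> f) \<circ> \<alpha>) c) (join_path c \<alpha>)"
    using ph_square[where F="g \<circ> f" and G=id, OF cH H0 H1 a(1)] a by (simp add: c_def)
  have "path_homotopic X (join_path c \<alpha>) (join_path (g \<circ> \<beta>) c)"
    unfolding \<alpha>_def by (rule ph_cancel2) (use c gb in auto)
  with sa have jj: "path_homotopic X (join_path ((g \<circ> f) \<circ> \<alpha>) c) (join_path (g \<circ> \<beta>) c)"
    by (rule ph_trans)
  have "path_homotopic X ((g \<circ> f) \<circ> \<alpha>) (g \<circ> \<beta>)"
    by (rule ph_rcancel[OF c(1) _ gb(1) _ _ jj]) (use a c gb pathin_compose[OF a(1) continuous_map_compose[OF fc gc]] in auto)
  then have gg: "path_homotopic X (g \<circ> (f \<circ> \<alpha>)) (g \<circ> \<beta>)" by (simp add: o_assoc)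
  have "path_homotopic Y (f \<circ> \<alpha>) \<beta>"
    by (rule heq_inj[OF gc fc hom2 fx0 _ lb gg]) (use a fc in \<open>auto simp: loopin_def pathin_compose\<close>)
  moreover have "loopin X x0 \<alpha>" using a by (simp add: loopin_def)
  ultimately show "\<exists>p. loopin X x0 p \<and> path_homotopic Y (f \<circ> p) \<beta>" by blast
qed

lemma tcd_empty: assumes "topspace X = {}" shows "TCD X = 0"
proof -
  have "TCD X \<le> enat 0"
    unfolding TCD_def
    by (rule INF_lower) (rule CollectI, rule exI[where x="\<lambda>_. {}"], simp add: assms diag_good_def)
  then show ?thesis by (simp add: zero_enat_def[symmetric])
qed

lemma part2:
  assumes pcX: "path_connected_space X" and pcY: "path_connected_space Y"
    and he: "X homotopy_equivalent_space Y"
  shows "TCD X = TCD Y"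
proof -
  obtain f g where fc: "continuous_map X Y f" and gc: "continuous_map Y X g"
    and h1: "homotopic_with (\<lambda>x. True) X X (g \<circ> f) id"
    and h2: "homotopic_with (\<lambda>x. True) Y Y (f \<circ> g) id"
    using he unfolding homotopy_equivalent_space_def by blast
  show ?thesis
  proof (cases "topspace X = {}")
    case True
    then have "topspace Y = {}" using continuous_map_image_subset_topspace[OF gc] by blast
    then have "TCD Y = 0" by (rule tcd_empty)
    moreover have "TCD X = 0" using True by (rule tcd_empty)
    ultimately show ?thesis by (simp only:)
  next
    case False
    then obtain x0 where x0: "x0 \<in> topspace X" by blast
    have fx0: "f x0 \<in> topspace Y" using continuous_map_image_subset_topspace[OF fc] x0 by blast
    have "TCD X \<le> TCD Y" by (rule part1[OF pcX fc x0 heq_iso[OF fc gc h1 h2 x0]])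
    moreover have "TCD Y \<le> TCD X" by (rule part1[OF pcY gc fx0 heq_iso[OF gc fc h2 h1 fx0]])
    ultimately show ?thesis by simp
  qed
qed

theorem mainTheorem5:
  shows "(\<forall>(X :: 'a topology) (Y :: 'b topology) f x0.
            path_connected_space X \<and> path_connected_space Y \<and> continuous_map X Y f \<and>
            x0 \<in> topspace X \<and> pi1_iso_induced X Y f x0
            \<longrightarrow> TCD X \<le> TCD Y) \<and>
         (\<forall>(X :: 'a topology) (Y :: 'b topology).
            path_connected_space X \<and> path_connected_space Y \<and> X homotopy_equivalent_space Y
            \<longrightarrow> TCD X = TCD Y)"
proof (intro conjI allI impI)
  fix X :: "'a topology" and Y :: "'b topology" and f x0
  assume "path_connected_space X \<and> path_connected_space Y \<and> continuous_map X Y f \<and>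
            x0 \<in> topspace X \<and> pi1_iso_induced X Y f x0"
  then have "path_connected_space X" "continuous_map X Y f" "x0 \<in> topspace X" "pi1_iso_induced X Y f x0"
    by auto
  then show "TCD X \<le> TCD Y" by (rule part1)
next
  fix X :: "'a topology" and Y :: "'b topology"
  assume "path_connected_space X \<and> path_connected_space Y \<and> X homotopy_equivalent_space Y"
  then have "path_connected_space X" "path_connected_space Y" "X homotopy_equivalent_space Y"
    by auto
  then show "TCD X = TCD Y" by (rule part2)
qed

end
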